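(* A $2$-connected graph $G$ satisfies $g(G)=c(G)$ if and only if $G$ is a cycle or a uniform theta graph.
   Context: All graphs are finite and simple. $g(G)$ is the girth (length of a shortest cycle) and $c(G)$ the circumference (length of a longest cycle) of $G$. The theta graph $\theta(l_1,\dots,l_k)$ is the graph obtained by joining two vertices by pairwise internally disjoint paths of lengths $l_1,\dots,l_k$. A theta graph is uniform if it has the form $\theta(a,a,\dots,a)$ (all paths of the same length $a$). *)

theory Defs
  imports Main
begin

definition simple_graph :: "'a set \<Rightarrow> ('a \<Rightarrow> 'a \<Rightarrow> bool) \<Rightarrow> bool" where
  "simple_graph V E \<longleftrightarrow> finite V \<and>
     (\<forall>x y. E x y \<longrightarrow> x \<in> V \<and> y \<in> V \<and> x \<noteq> y \<and> E y x)"

definition connected_on :: "'a set \<Rightarrow> ('a \<Rightarrow> 'a \<Rightarrow> bool) \<Rightarrow> bool" where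
  "connected_on S E \<longleftrightarrow> S \<noteq> {} \<and>
     (\<forall>x\<in>S. \<forall>y\<in>S. (\<lambda>a b. E a b \<and> a \<in> S \<and> b \<in> S)\<^sup>*\<^sup>* x y)"

definition two_connected :: "'a set \<Rightarrow> ('a \<Rightarrow> 'a \<Rightarrow> bool) \<Rightarrow> bool" where
  "two_connected V E \<longleftrightarrow> card V > 2 \<and> connected_on V E \<and>
     (\<forall>v\<in>V. connected_on (V - {v}) E)"

text \<open>A cycle of G given as the cyclic list of its distinct vertices; its length is the
  number of vertices (= number of edges).\<close>
definition is_cycle :: "'a set \<Rightarrow> ('a \<Rightarrow> 'a \<Rightarrow> bool) \<Rightarrow> 'a list \<Rightarrow> bool" where
  "is_cycle V E cs \<longleftrightarrow> length cs \<ge> 3 \<and> distinct cs \<and> set cs \<subseteq> V \<and>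
     (\<forall>i < length cs. E (cs ! i) (cs ! ((i + 1) mod length cs)))"

definition girth :: "'a set \<Rightarrow> ('a \<Rightarrow> 'a \<Rightarrow> bool) \<Rightarrow> nat" where
  "girth V E = Min {length cs | cs. is_cycle V E cs}"

definition circumference :: "'a set \<Rightarrow> ('a \<Rightarrow> 'a \<Rightarrow> bool) \<Rightarrow> nat" where
  "circumference V E = Max {length cs | cs. is_cycle V E cs}"

definition is_cycle_graph :: "'a set \<Rightarrow> ('a \<Rightarrow> 'a \<Rightarrow> bool) \<Rightarrow> bool" where
  "is_cycle_graph V E \<longleftrightarrow> (\<exists>xs. length xs \<ge> 3 \<and> distinct xs \<and> set xs = V \<and>
     (\<forall>x y. E x y \<longleftrightarrow> (\<exists>i < length xs.
        (x = xs ! i \<and> y = xs ! ((i + 1) mod length xs)) \<or>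
        (y = xs ! i \<and> x = xs ! ((i + 1) mod length xs)))))"

text \<open>G is a uniform theta graph theta(a,...,a): two distinct vertices u, w joined by
  k \<ge> 1 distinct, pairwise internally disjoint paths, each of length a (a edges, a+1 vertices);
  G consists exactly of these paths.\<close>
definition is_uniform_theta :: "'a set \<Rightarrow> ('a \<Rightarrow> 'a \<Rightarrow> bool) \<Rightarrow> bool" where
  "is_uniform_theta V E \<longleftrightarrow> (\<exists>u w (a::nat) Ps. u \<noteq> w \<and> a \<ge> 1 \<and> Ps \<noteq> [] \<and> distinct Ps \<and>
     (\<forall>P\<in>set Ps. length P = a + 1 \<and> distinct P \<and> hd P = u \<and> last P = w) \<and>
     (\<forall>i < length Ps. \<forall>j < length Ps. i \<noteq> j \<longrightarrow> set (Ps ! i) \<inter> set (Ps ! j) = {u, w}) \<and>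
     V = (\<Union>P\<in>set Ps. set P) \<and>
     (\<forall>x y. E x y \<longleftrightarrow> (\<exists>P\<in>set Ps. \<exists>i. Suc i < length P \<and>
        ((x = P ! i \<and> y = P ! Suc i) \<or> (y = P ! i \<and> x = P ! Suc i)))))"

end

theory Submission
  imports Defs
begin

fun walk :: "('a \<Rightarrow> 'a \<Rightarrow> bool) \<Rightarrow> 'a list \<Rightarrow> bool" where
  "walk E [] = True"
| "walk E [x] = True"
| "walk E (x # y # xs) = (E x y \<and> walk E (y # xs))"

lemma walk_Cons[simp]: "walk E (x # xs) \<longleftrightarrow> walk E xs \<and> (xs \<noteq> [] \<longrightarrow> E x (hd xs))"
  by (cases xs) auto

declare walk.simps(2,3)[simp del]

lemma walk_append[simp]:
  "walk E (xs @ ys) \<longleftrightarrow> walk E xs \<and> walk E ys \<and> (xs \<noteq> [] \<longrightarrow> ys \<noteq> [] \<longrightarrow> E (last xs) (hd ys))"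
  by (induction xs) auto

lemma walk_rev[simp]:
  assumes "\<forall>x y. E x y \<longrightarrow> E y x"
  shows "walk E (rev xs) \<longleftrightarrow> walk E xs"
  using assms by (induction xs) (auto simp: hd_rev last_rev)

lemma walk_nth: "walk E xs \<longleftrightarrow> (\<forall>i. Suc i < length xs \<longrightarrow> E (xs ! i) (xs ! Suc i))"
proof (induction xs)
  case Nil
  then show ?case by simp
next
  case (Cons x xs)
  show ?case
  proof (cases xs)
    case Nil
    then show ?thesis by simp
  next
    case (Cons y ys)
    show ?thesis
      unfolding \<open>xs = y # ys\<close> walk_Cons
      using Cons.IH[unfolded \<open>xs = y # ys\<close>]
      apply (auto simp: hd_conv_nth)
      using less_Suc_eq_0_disj by auto
  qed
qed

lemma mod_Suc_if: "k < n \<Longrightarrow> Suc k mod n = (if Suc k = n then 0 else Suc k)"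
  by auto

lemma mod_pred_if: "(k::nat) < n \<Longrightarrow> (k + n - 1) mod n = (if k = 0 then n - 1 else k - 1)"
proof -
  assume "k < n"
  show ?thesis
  proof (cases "k = 0")
    case True
    have "n - 1 < n" using \<open>k < n\<close> by simp
    then show ?thesis using True by (simp add: mod_less)
  next
    case False
    then have "k + n - 1 = (k - 1) + n" by simp
    moreover have "((k - 1) + n) mod n = (k - 1) mod n" by simp
    moreover have "(k - 1) mod n = k - 1" using \<open>k < n\<close> by simp
    ultimately show ?thesis using False by simp
  qed
qed

lemma is_cycle_alt:
  "is_cycle V E cs \<longleftrightarrow> length cs \<ge> 3 \<and> distinct cs \<and> set cs \<subseteq> V \<and> walk E cs \<and> E (last cs) (hd cs)"
proof -
  have key: "(\<forall>i < length cs. E (cs ! i) (cs ! ((i + 1) mod length cs))) \<longleftrightarrow>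
        walk E cs \<and> E (last cs) (hd cs)" if "length cs \<ge> 3"
  proof -
    let ?n = "length cs"
    have "(\<forall>i < ?n. E (cs ! i) (cs ! ((i + 1) mod ?n))) \<longleftrightarrow>
       (\<forall>i. Suc i < ?n \<longrightarrow> E (cs ! i) (cs ! Suc i)) \<and> E (cs ! (?n - 1)) (cs ! 0)"
    proof
      assume H: "\<forall>i < ?n. E (cs ! i) (cs ! ((i + 1) mod ?n))"
      have 1: "E (cs ! i) (cs ! Suc i)" if "Suc i < ?n" for i
        using H[rule_format, of i] that by simp
      have "E (cs ! (?n - 1)) (cs ! ((?n - 1 + 1) mod ?n))"
        using H[rule_format, of "?n - 1"] that by simp
      moreover have "(?n - 1 + 1) mod ?n = 0"
      proof -
        have "?n - 1 + 1 = ?n" using that by simp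
        then show ?thesis by simp
      qed
      ultimately show "(\<forall>i. Suc i < ?n \<longrightarrow> E (cs ! i) (cs ! Suc i)) \<and> E (cs ! (?n - 1)) (cs ! 0)"
        using 1 by simp
    next
      assume H: "(\<forall>i. Suc i < ?n \<longrightarrow> E (cs ! i) (cs ! Suc i)) \<and> E (cs ! (?n - 1)) (cs ! 0)"
      show "\<forall>i < ?n. E (cs ! i) (cs ! ((i + 1) mod ?n))"
      proof (intro allI impI)
        fix i assume "i < ?n"
        show "E (cs ! i) (cs ! ((i + 1) mod ?n))"
        proof (cases "Suc i < ?n")
          case True then show ?thesis using H by simp
        next
          case False
          then have "i = ?n - 1" using \<open>i < ?n\<close> by simp
          moreover have "Suc (?n - 1) = ?n" using that by simp
          ultimately show ?thesis using H by simp
        qed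
      qed
    qed
    moreover have "cs \<noteq> []" using that by auto
    ultimately show ?thesis by (simp add: walk_nth hd_conv_nth last_conv_nth)
  qed
  show ?thesis unfolding is_cycle_def using key by auto
qed


lemma is_cycle_rotate1: "is_cycle V E cs \<Longrightarrow> is_cycle V E (rotate1 cs)"
proof -
  assume c: "is_cycle V E cs"
  then obtain x xs where cs: "cs = x # xs" and ne: "xs \<noteq> []"
    unfolding is_cycle_alt by (cases cs; cases "tl cs") auto
  show ?thesis using c unfolding is_cycle_alt cs using ne by auto
qed

lemma is_cycle_rotate: "is_cycle V E cs \<Longrightarrow> is_cycle V E (rotate m cs)"
  by (induction m) (auto intro: is_cycle_rotate1)

definition cedge :: "'a list \<Rightarrow> 'a \<Rightarrow> 'a \<Rightarrow> bool" where
  "cedge C x y \<longleftrightarrow> (\<exists>i<length C. (x = C ! i \<and> y = C ! ((i + 1) mod length C)) \<or>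
      (y = C ! i \<and> x = C ! ((i + 1) mod length C)))"

lemma cedge_rot1:
  assumes "rotate m C = x # y # B"
  shows "cedge C x y"
proof -
  have ne: "C \<noteq> []" using assms by auto
  have l: "length C \<ge> 2" using arg_cong[OF assms, of length] by simp
  have x: "x = C ! (m mod length C)"
    using nth_rotate[of 0 C m] assms l ne by simp
  have y: "y = C ! (Suc m mod length C)"
    using nth_rotate[of 1 C m] assms l by simp
  have "Suc (m mod length C) mod length C = Suc m mod length C" by (simp add: mod_Suc_eq)
  then show ?thesis unfolding cedge_def using x y ne
    by (intro exI[of _ "m mod length C"]) auto
qed

lemma cedge_rot2:
  assumes "rotate m C = x # A @ [y]"
  shows "cedge C x y"
proof -
  let ?n = "length C"
  have ln: "?n = length A + 2" using arg_cong[OF assms, of length] by simp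
  have x: "x = C ! (m mod ?n)"
    using nth_rotate[of 0 C m] assms ln by simp
  have "rotate m C ! (?n - 1) = y" using assms ln by (simp add: nth_append)
  then have y: "y = C ! ((m + (?n - 1)) mod ?n)"
    using nth_rotate[of "?n - 1" C m] ln by simp
  define i where "i = (m + (?n - 1)) mod ?n"
  have "(i + 1) mod ?n = (m + (?n - 1) + 1) mod ?n" unfolding i_def by (simp add: mod_Suc_eq)
  also have "m + (?n - 1) + 1 = m + ?n" using ln by simp
  finally have "(i + 1) mod ?n = m mod ?n" by simp
  moreover have "i < ?n" unfolding i_def using ln by simp
  ultimately show ?thesis unfolding cedge_def
    apply (intro exI[of _ i])
    using x y unfolding i_def[symmetric] by auto
qed

lemma rtranclp_sym:
  assumes "\<forall>a b. R a b \<longrightarrow> R b a" "R\<^sup>*\<^sup>* x y"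
  shows "R\<^sup>*\<^sup>* y x"
  using assms(2)
proof (induction rule: rtranclp_induct)
  case base then show ?case by simp
next
  case (step y z)
  then show ?case using assms(1) by (meson converse_rtranclp_into_rtranclp)
qed

lemma path_exists:
  assumes "(\<lambda>a b. E a b \<and> a \<in> T \<and> b \<in> T)\<^sup>*\<^sup>* p q" "p \<in> T"
  shows "\<exists>L. L \<noteq> [] \<and> hd L = p \<and> last L = q \<and> distinct L \<and> set L \<subseteq> T \<and> walk E L"
  using assms(1)
proof (induction rule: rtranclp_induct)
  case base
  then show ?case using assms(2) by (intro exI[of _ "[p]"]) auto
next
  case (step b c)
  then obtain L where L: "L \<noteq> []" "hd L = p" "last L = b" "distinct L" "set L \<subseteq> T" "walk E L" by blast
  show ?case
  proof (cases "c \<in> set L")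
    case True
    then obtain L1 L2 where sp: "L = L1 @ c # L2" by (meson split_list)
    have "walk E (L1 @ [c])" using L(6) unfolding sp by simp
    moreover have "hd (L1 @ [c]) = p" using L(2) unfolding sp by (cases L1) auto
    ultimately show ?thesis using L(4,5) unfolding sp by (intro exI[of _ "L1 @ [c]"]) auto
  next
    case False
    then show ?thesis using L step.hyps(2) by (intro exI[of _ "L @ [c]"]) auto
  qed
qed


definition ear :: "'a set \<Rightarrow> ('a \<Rightarrow> 'a \<Rightarrow> bool) \<Rightarrow> 'a set \<Rightarrow> ('a \<Rightarrow> 'a \<Rightarrow> bool) \<Rightarrow> 'a \<Rightarrow> 'a list \<Rightarrow> 'a \<Rightarrow> bool" where
  "ear V E S F x L y \<longleftrightarrow> x \<in> S \<and> y \<in> S \<and> x \<noteq> y \<and> walk E (x # L @ [y]) \<and> distinct L \<and>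
     set L \<subseteq> V \<and> set L \<inter> S = {} \<and> (L = [] \<longrightarrow> \<not> F x y)"

lemma sg_sym: "simple_graph V E \<Longrightarrow> \<forall>x y. E x y \<longrightarrow> E y x"
  unfolding simple_graph_def by blast

lemma sg_irrefl: "simple_graph V E \<Longrightarrow> E x y \<Longrightarrow> x \<noteq> y"
  unfolding simple_graph_def by blast

lemma sg_V: "simple_graph V E \<Longrightarrow> E x y \<Longrightarrow> x \<in> V \<and> y \<in> V"
  unfolding simple_graph_def by blast

lemma rtranclp_stays:
  assumes "(\<lambda>a b. E a b \<and> a \<in> T \<and> b \<in> T)\<^sup>*\<^sup>* p q" "p \<in> T"
  shows "q \<in> T"
  using assms by (induction rule: rtranclp_induct) auto

lemma walk_rev_path:
  assumes "\<forall>x y. E x y \<longrightarrow> E y x" "walk E (x # L @ [y])"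
  shows "walk E (y # rev L @ [x])"
proof -
  have "walk E (rev (x # L @ [y]))" by (simp only: walk_rev[OF assms(1)] assms(2))
  moreover have "rev (x # L @ [y]) = y # rev L @ [x]" by simp
  ultimately show ?thesis by metis
qed

lemma ear_rev:
  assumes "ear V E S F x L y" "\<forall>x y. E x y \<longrightarrow> E y x" "\<forall>x y. F x y \<longrightarrow> F y x"
  shows "ear V E S F y (rev L) x"
proof -
  have "walk E (y # rev L @ [x])" using walk_rev_path[OF assms(2)] assms(1) unfolding ear_def by blast
  then show ?thesis using assms unfolding ear_def by auto
qed

lemma ear_exists:
  assumes sg: "simple_graph V E" and tc: "two_connected V E" and SV: "S \<subseteq> V"
    and x0: "x0 \<in> S" and x1: "x1 \<in> S" "x0 \<noteq> x1"
    and nt: "\<not> (S = V \<and> (\<forall>x\<in>S. \<forall>y\<in>S. E x y \<longrightarrow> F x y))"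
  shows "\<exists>x L y. ear V E S F x L y"
proof (cases "\<exists>x\<in>S. \<exists>y\<in>S. E x y \<and> \<not> F x y")
  case True
  then obtain x y where "x \<in> S" "y \<in> S" "E x y" "\<not> F x y" by blast
  then have "ear V E S F x [] y" unfolding ear_def using sg_irrefl[OF sg] by auto
  then show ?thesis by blast
next
  case False
  have sym: "\<forall>x y. E x y \<longrightarrow> E y x" using sg_sym[OF sg] .
  with False nt have "S \<noteq> V" by blast
  then obtain z where z: "z \<in> V" "z \<notin> S" using SV by blast
  define R where "R = (\<lambda>T a b. E a b \<and> a \<in> T \<and> b \<in> T)"
  define D where "D = {d. (R (V - S))\<^sup>*\<^sup>* z d}"
  have DVS: "D \<subseteq> V - S"
    unfolding D_def R_def using rtranclp_stays[of E "V - S" z] z by blast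
  define N where "N = {s\<in>S. \<exists>d\<in>D. E d s}"
  have "\<exists>x\<in>N. \<exists>y\<in>N. x \<noteq> y"
  proof (rule ccontr)
    assume "\<not> (\<exists>x\<in>N. \<exists>y\<in>N. x \<noteq> y)"
    then obtain c where c: "c \<in> S" "N \<subseteq> {c}"
      using x0 unfolding N_def by blast
    obtain s where s: "s \<in> S" "s \<noteq> c" using x0 x1 by blast
    have "connected_on (V - {c}) E" using tc c(1) SV unfolding two_connected_def by blast
    then have reach: "(R (V - {c}))\<^sup>*\<^sup>* z s"
      unfolding connected_on_def R_def using z s SV c by blast
    have "b \<in> D" if "(R (V - {c}))\<^sup>*\<^sup>* z b" for b
      using that
    proof (induction rule: rtranclp_induct)
      case base then show ?case unfolding D_def by simp
    next
      case (step b b')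
      then have b': "E b b'" "b' \<in> V - {c}" "b \<in> V - S" unfolding R_def using DVS by auto
      have "b' \<notin> S"
      proof
        assume "b' \<in> S"
        then have "b' \<in> N" unfolding N_def using step.IH b' by blast
        then show False using c b' by blast
      qed
      then have "R (V - S) b b'" unfolding R_def using b' by auto
      then show ?case using step.IH unfolding D_def by auto
    qed
    from this[OF reach] show False using DVS s by blast
  qed
  then obtain x y d1 d2 where xy: "x \<in> S" "y \<in> S" "x \<noteq> y" "d1 \<in> D" "d2 \<in> D" "E d1 x" "E d2 y"
    unfolding N_def by blast
  have "(R (V - S))\<^sup>*\<^sup>* d1 z"
    using rtranclp_sym[of "R (V - S)" z d1] xy(4) sym unfolding D_def R_def by blast
  then have "(R (V - S))\<^sup>*\<^sup>* d1 d2" using xy(5) unfolding D_def by auto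
  then obtain L where L: "L \<noteq> []" "hd L = d1" "last L = d2" "distinct L" "set L \<subseteq> V - S" "walk E L"
    using path_exists[of E "V - S" d1 d2] xy(4) DVS unfolding R_def by blast
  have "ear V E S F x L y" unfolding ear_def using L xy sym by auto
  then show ?thesis by blast
qed


lemma two_paths_cycle:
  assumes sym: "\<forall>x y. E x y \<longrightarrow> E y x" and w1: "walk E (x # A @ [y])" and w2: "walk E (x # B @ [y])"
    and d: "distinct (x # y # A @ B)" and s: "set (x # y # A @ B) \<subseteq> V" and ne: "A \<noteq> [] \<or> B \<noteq> []"
  shows "is_cycle V E (x # A @ y # rev B)"
proof -
  have w3: "walk E (y # rev B @ [x])" using walk_rev_path[OF sym w2] .
  have eq: "x # A @ y # rev B = (x # A @ [y]) @ rev B" by simp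
  have "walk E (x # A @ y # rev B)"
  proof (cases "B = []")
    case True then show ?thesis using w1 by simp
  next
    case False
    have "walk E (rev B)" "E y (hd (rev B))" using w3 False by auto
    then show ?thesis unfolding eq using w1 False by (simp only: walk_append) auto
  qed
  moreover have "E (last (x # A @ y # rev B)) x"
  proof (cases "B = []")
    case True then show ?thesis using w3 by simp
  next
    case False
    have "E (last (rev B)) x" using w3 False by simp
    then show ?thesis using False by simp
  qed
  moreover have "length (x # A @ y # rev B) \<ge> 3" using ne by (auto simp: Suc_le_eq)
  ultimately show ?thesis unfolding is_cycle_alt using d s by auto
qed

lemma two_paths_len:
  assumes cyc: "\<forall>cs. is_cycle V E cs \<longrightarrow> length cs = n"
    and sym: "\<forall>x y. E x y \<longrightarrow> E y x" and w1: "walk E (x # A @ [y])" and w2: "walk E (x # B @ [y])"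
    and d: "distinct (x # y # A @ B)" and s: "set (x # y # A @ B) \<subseteq> V" and ne: "A \<noteq> [] \<or> B \<noteq> []"
  shows "length A + length B + 2 = n"
  using cyc two_paths_cycle[OF sym w1 w2 d s ne] by fastforce


lemma walk_split: "walk E (x # A @ y # R) \<longleftrightarrow> walk E (x # A @ [y]) \<and> walk E (y # R)"
  by (induction A arbitrary: x) auto

definition consec :: "'a list \<Rightarrow> 'a \<Rightarrow> 'a \<Rightarrow> bool" where
  "consec P x y \<longleftrightarrow> (\<exists>i. Suc i < length P \<and> ((x = P ! i \<and> y = P ! Suc i) \<or> (y = P ! i \<and> x = P ! Suc i)))"

lemma consec_sym: "consec P x y \<Longrightarrow> consec P y x"
  unfolding consec_def by blast

lemma consec_mid: "consec (xs @ x # y # ys) x y"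
  unfolding consec_def by (intro exI[of _ "length xs"]) (auto simp: nth_append)

locale theta3 =
  fixes V :: "'a set" and E :: "'a \<Rightarrow> 'a \<Rightarrow> bool" and n a :: nat and u w :: 'a and Ai Aj Al :: "'a list"
  assumes cyc: "\<forall>cs. is_cycle V E cs \<longrightarrow> length cs = n"
    and sym: "\<forall>x y. E x y \<longrightarrow> E y x"
    and n2a: "n = 2 * a" and a2: "a \<ge> 2"
    and d: "distinct (u # w # Ai @ Aj @ Al)"
    and li: "length Ai = a - 1" and lj: "length Aj = a - 1" and ll: "length Al = a - 1"
    and wi: "walk E (u # Ai @ [w])" and wj: "walk E (u # Aj @ [w])" and wl: "walk E (u # Al @ [w])"
    and sV: "set (u # w # Ai @ Aj @ Al) \<subseteq> V"
begin

lemma tp: "walk E (p # A @ [q]) \<Longrightarrow> walk E (p # B @ [q]) \<Longrightarrow> distinct (p # q # A @ B) \<Longrightarrow>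
   set (p # q # A @ B) \<subseteq> V \<Longrightarrow> A \<noteq> [] \<or> B \<noteq> [] \<Longrightarrow> length A + length B + 2 = n"
  using two_paths_len[OF cyc sym] by blast

end


context theta3 begin

lemma case_u:
  assumes x: "x \<in> set Ai" and wL: "walk E (x # L @ [u])" and dL: "distinct L" and LV: "set L \<subseteq> V"
    and Ld: "set L \<inter> set (u # w # Ai @ Aj @ Al) = {}"
    and nc: "L = [] \<longrightarrow> \<not> consec (u # Ai @ [w]) x u"
  shows False
proof -
  obtain A1 A2 where Ai: "Ai = A1 @ x # A2" using x by (meson split_list)
  have w1: "walk E (u # A1 @ [x])" "walk E (x # A2 @ [w])"
  proof -
    have "walk E (u # A1 @ x # (A2 @ [w]))" using wi unfolding Ai by (simp only: append_Cons append_assoc)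
    from walk_split[THEN iffD1, OF this] show "walk E (u # A1 @ [x])" "walk E (x # A2 @ [w])" by auto
  qed
  have p1: "walk E (x # rev A1 @ [u])" using walk_rev_path[OF sym w1(1)] .
  have wjr: "walk E (w # rev Aj @ [u])" using walk_rev_path[OF sym wj] .
  have p2: "walk E (x # (A2 @ w # rev Aj) @ [u])"
    using walk_split[THEN iffD2, OF conjI[OF w1(2) wjr]] by simp
  have e1: "length (rev A1) + length L + 2 = n"
  proof (rule tp[OF p1 wL])
    show "distinct (x # u # rev A1 @ L)" using d Ld dL unfolding Ai by auto
    show "set (x # u # rev A1 @ L) \<subseteq> V" using sV LV unfolding Ai by auto
    show "rev A1 \<noteq> [] \<or> L \<noteq> []"
    proof (rule ccontr)
      assume "\<not> (rev A1 \<noteq> [] \<or> L \<noteq> [])"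
      then have "A1 = []" "L = []" by simp_all
      have "consec (u # Ai @ [w]) u x" unfolding Ai using consec_mid[of "[]" u x "A2 @ [w]"] \<open>A1 = []\<close> by simp
      then show False using nc \<open>L = []\<close> consec_sym[of "u # Ai @ [w]" u x] by simp
    qed
  qed
  have e2: "length (A2 @ w # rev Aj) + length L + 2 = n"
  proof (rule tp[OF p2 wL])
    show "distinct (x # u # (A2 @ w # rev Aj) @ L)" using d Ld dL unfolding Ai by auto
    show "set (x # u # (A2 @ w # rev Aj) @ L) \<subseteq> V" using sV LV unfolding Ai by auto
  qed simp
  show False using e1 e2 li lj a2 unfolding Ai by simp
qed


lemma case_w:
  assumes x: "x \<in> set Ai" and wL: "walk E (x # L @ [w])" and dL: "distinct L" and LV: "set L \<subseteq> V"
    and Ld: "set L \<inter> set (u # w # Ai @ Aj @ Al) = {}"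
    and nc: "L = [] \<longrightarrow> \<not> consec (u # Ai @ [w]) x w"
  shows False
proof -
  obtain A1 A2 where Ai: "Ai = A1 @ x # A2" using x by (meson split_list)
  have w1: "walk E (u # A1 @ [x])" "walk E (x # A2 @ [w])"
  proof -
    have "walk E (u # A1 @ x # (A2 @ [w]))" using wi unfolding Ai by (simp only: append_Cons append_assoc)
    from walk_split[THEN iffD1, OF this] show "walk E (u # A1 @ [x])" "walk E (x # A2 @ [w])" by auto
  qed
  have p1r: "walk E (x # rev A1 @ [u])" using walk_rev_path[OF sym w1(1)] .
  have p2: "walk E (x # (rev A1 @ u # Aj) @ [w])"
    using walk_split[THEN iffD2, OF conjI[OF p1r wj]] by simp
  have e1: "length A2 + length L + 2 = n"
  proof (rule tp[OF w1(2) wL])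
    show "distinct (x # w # A2 @ L)" using d Ld dL unfolding Ai by auto
    show "set (x # w # A2 @ L) \<subseteq> V" using sV LV unfolding Ai by auto
    show "A2 \<noteq> [] \<or> L \<noteq> []"
    proof (rule ccontr)
      assume "\<not> (A2 \<noteq> [] \<or> L \<noteq> [])"
      then have "A2 = []" "L = []" by simp_all
      have "consec (u # Ai @ [w]) x w" unfolding Ai using consec_mid[of "u # A1" x w "[]"] \<open>A2 = []\<close> by simp
      then show False using nc \<open>L = []\<close> by simp
    qed
  qed
  have e2: "length (rev A1 @ u # Aj) + length L + 2 = n"
  proof (rule tp[OF p2 wL])
    show "distinct (x # w # (rev A1 @ u # Aj) @ L)" using d Ld dL unfolding Ai by auto
    show "set (x # w # (rev A1 @ u # Aj) @ L) \<subseteq> V" using sV LV unfolding Ai by auto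
  qed simp
  show False using e1 e2 li lj a2 unfolding Ai by simp
qed

lemma case_after:
  assumes Ai: "Ai = A1 @ x # M @ y # A3" and wL: "walk E (x # L @ [y])" and dL: "distinct L" and LV: "set L \<subseteq> V"
    and Ld: "set L \<inter> set (u # w # Ai @ Aj @ Al) = {}"
    and nc: "L = [] \<longrightarrow> \<not> consec (u # Ai @ [w]) x y"
  shows False
proof -
  have w1: "walk E (u # A1 @ [x])" "walk E (x # M @ y # A3 @ [w])"
  proof -
    have "walk E (u # A1 @ x # (M @ y # A3 @ [w]))" using wi unfolding Ai by (simp only: append_Cons append_assoc)
    from walk_split[THEN iffD1, OF this] show "walk E (u # A1 @ [x])" "walk E (x # M @ y # A3 @ [w])" by auto
  qed
  have w2: "walk E (x # M @ [y])" "walk E (y # A3 @ [w])"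
    using walk_split[THEN iffD1, OF w1(2)] by auto
  have r1: "walk E (x # rev A1 @ [u])" using walk_rev_path[OF sym w1(1)] .
  have r3: "walk E (w # rev A3 @ [y])" using walk_rev_path[OF sym w2(2)] .
  have j1: "walk E (u # Aj @ w # (rev A3 @ [y]))"
    using walk_split[THEN iffD2, OF conjI[OF wj r3]] .
  have j2: "walk E (x # rev A1 @ u # (Aj @ w # rev A3 @ [y]))"
    using walk_split[THEN iffD2, OF conjI[OF r1 j1]] .
  have p2: "walk E (x # (rev A1 @ u # Aj @ w # rev A3) @ [y])" using j2 by simp
  have e1: "length M + length L + 2 = n"
  proof (rule tp[OF w2(1) wL])
    show "distinct (x # y # M @ L)" using d Ld dL unfolding Ai by auto
    show "set (x # y # M @ L) \<subseteq> V" using sV LV unfolding Ai by auto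
    show "M \<noteq> [] \<or> L \<noteq> []"
    proof (rule ccontr)
      assume "\<not> (M \<noteq> [] \<or> L \<noteq> [])"
      then have "M = []" "L = []" by simp_all
      have "consec (u # Ai @ [w]) x y" unfolding Ai using consec_mid[of "u # A1" x y "A3 @ [w]"] \<open>M = []\<close> by simp
      then show False using nc \<open>L = []\<close> by simp
    qed
  qed
  have e2: "length (rev A1 @ u # Aj @ w # rev A3) + length L + 2 = n"
  proof (rule tp[OF p2 wL])
    show "distinct (x # y # (rev A1 @ u # Aj @ w # rev A3) @ L)" using d Ld dL unfolding Ai by auto
    show "set (x # y # (rev A1 @ u # Aj @ w # rev A3) @ L) \<subseteq> V" using sV LV unfolding Ai by auto
  qed simp
  show False using e1 e2 li lj a2 unfolding Ai by simp
qed

lemma case_other: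
  assumes x: "x \<in> set Ai" and y: "y \<in> set Aj" and wL: "walk E (x # L @ [y])" and dL: "distinct L" and LV: "set L \<subseteq> V"
    and Ld: "set L \<inter> set (u # w # Ai @ Aj @ Al) = {}"
  shows False
proof -
  obtain A1 A2 where Ai: "Ai = A1 @ x # A2" using x by (meson split_list)
  obtain B1 B2 where Aj: "Aj = B1 @ y # B2" using y by (meson split_list)
  have w1: "walk E (u # A1 @ [x])"
  proof -
    have "walk E (u # A1 @ x # (A2 @ [w]))" using wi unfolding Ai by (simp only: append_Cons append_assoc)
    from walk_split[THEN iffD1, OF this] show "walk E (u # A1 @ [x])" by auto
  qed
  have w2: "walk E (u # B1 @ [y])" "walk E (y # B2 @ [w])"
  proof -
    have "walk E (u # B1 @ y # (B2 @ [w]))" using wj unfolding Aj by (simp only: append_Cons append_assoc)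
    from walk_split[THEN iffD1, OF this] show "walk E (u # B1 @ [y])" "walk E (y # B2 @ [w])" by auto
  qed
  have r2: "walk E (w # rev B2 @ [y])" using walk_rev_path[OF sym w2(2)] .
  have p2: "walk E (u # (Al @ w # rev B2) @ [y])"
    using walk_split[THEN iffD2, OF conjI[OF wl r2]] by simp
  have p3: "walk E (u # (A1 @ x # L) @ [y])"
    using walk_split[THEN iffD2, OF conjI[OF w1 wL]] by simp
  have e1: "length B1 + length (A1 @ x # L) + 2 = n"
  proof (rule tp[OF w2(1) p3])
    show "distinct (u # y # B1 @ (A1 @ x # L))" using d Ld dL unfolding Ai Aj by auto
    show "set (u # y # B1 @ (A1 @ x # L)) \<subseteq> V" using sV LV unfolding Ai Aj by auto
  qed simp
  have e2: "length (Al @ w # rev B2) + length (A1 @ x # L) + 2 = n"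
  proof (rule tp[OF p2 p3])
    show "distinct (u # y # (Al @ w # rev B2) @ (A1 @ x # L))" using d Ld dL unfolding Ai Aj by auto
    show "set (u # y # (Al @ w # rev B2) @ (A1 @ x # L)) \<subseteq> V" using sV LV unfolding Ai Aj by auto
  qed simp
  show False using e1 e2 ll lj a2 unfolding Aj by simp
qed


lemma internal_x:
  assumes x: "x \<in> set Ai" and y: "y \<in> {u, w} \<union> set Ai \<union> set Aj" and xy: "x \<noteq> y"
    and wL: "walk E (x # L @ [y])" and dL: "distinct L" and LV: "set L \<subseteq> V"
    and Ld: "set L \<inter> set (u # w # Ai @ Aj @ Al) = {}"
    and nc: "L = [] \<longrightarrow> \<not> consec (u # Ai @ [w]) x y"
  shows False
proof -
  consider "y = u" | "y = w" | "y \<in> set Ai" | "y \<in> set Aj" using y by blast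
  then show False
  proof cases
    case 1 then show ?thesis using case_u assms by blast
  next
    case 2 then show ?thesis using case_w assms by blast
  next
    case 3
    obtain A1 A2 where Ai: "Ai = A1 @ x # A2" using x by (meson split_list)
    have "distinct Ai" using d by simp
    then have "y \<in> set A1 \<or> y \<in> set A2" using 3 xy unfolding Ai by auto
    then show ?thesis
    proof
      assume "y \<in> set A2"
      then obtain M A3 where "A2 = M @ y # A3" by (meson split_list)
      then have "Ai = A1 @ x # M @ y # A3" using Ai by simp
      then show ?thesis using case_after assms by blast
    next
      assume "y \<in> set A1"
      then obtain A0 M where "A1 = A0 @ y # M" by (meson split_list)
      then have Ai': "Ai = A0 @ y # M @ x # A2" using Ai by simp
      have wL': "walk E (y # rev L @ [x])" using walk_rev_path[OF sym wL] .
      have nc': "rev L = [] \<longrightarrow> \<not> consec (u # Ai @ [w]) y x" using nc consec_sym[of "u # Ai @ [w]" y x] by blast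
      show ?thesis using case_after[OF Ai' wL'] dL LV Ld nc' by auto
    qed
  next
    case 4 then show ?thesis using case_other assms by blast
  qed
qed

end

definition thetaS :: "'a set \<Rightarrow> ('a \<Rightarrow> 'a \<Rightarrow> bool) \<Rightarrow> 'a \<Rightarrow> 'a \<Rightarrow> nat \<Rightarrow> 'a list list \<Rightarrow> bool" where
  "thetaS V E u w a As \<longleftrightarrow> u \<noteq> w \<and> a \<ge> 2 \<and> length As \<ge> 3 \<and> distinct As \<and>
     distinct (u # w # concat As) \<and> (\<forall>A\<in>set As. length A = a - 1 \<and> walk E (u # A @ [w])) \<and>
     set (u # w # concat As) \<subseteq> V"

lemma other_exists:
  assumes "distinct As" "length As \<ge> 3" "A \<in> set As" "B \<in> set As"
  shows "\<exists>C\<in>set As. C \<noteq> A \<and> C \<noteq> B"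
proof (rule ccontr)
  assume "\<not> ?thesis"
  then have "set As \<subseteq> {A, B}" by blast
  then have "card (set As) \<le> card {A, B}" by (intro card_mono) auto
  also have "card {A, B} \<le> 2" by (simp add: card_insert_if)
  finally have "card (set As) \<le> 2" .
  moreover have "card (set As) = length As" using assms(1) by (simp add: distinct_card)
  ultimately show False using assms(2) by simp
qed

lemma distinct_three:
  assumes "distinct (u # w # concat As)" "Ai \<in> set As" "Aj \<in> set As" "Al \<in> set As"
    "Ai \<noteq> Aj" "Ai \<noteq> Al" "Aj \<noteq> Al"
  shows "distinct (u # w # Ai @ Aj @ Al)"
proof -
  have dc: "distinct (concat As)" using assms(1) by simp
  then have "\<forall>ys\<in>set As. distinct ys" "\<forall>ys zs. ys \<in> set As \<and> zs \<in> set As \<and> ys \<noteq> zs \<longrightarrow> set ys \<inter> set zs = {}"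
    unfolding distinct_concat_iff by auto
  moreover have "u \<notin> set Ai \<union> set Aj \<union> set Al" "w \<notin> set Ai \<union> set Aj \<union> set Al" "u \<noteq> w"
    using assms by auto
  ultimately show ?thesis using assms(2-7) by auto
qed


definition tS :: "'a \<Rightarrow> 'a \<Rightarrow> 'a list list \<Rightarrow> 'a set" where
  "tS u w As = {u, w} \<union> set (concat As)"

definition tF :: "'a \<Rightarrow> 'a \<Rightarrow> 'a list list \<Rightarrow> 'a \<Rightarrow> 'a \<Rightarrow> bool" where
  "tF u w As x y \<longleftrightarrow> (\<exists>A\<in>set As. consec (u # A @ [w]) x y)"

lemma tF_sym: "\<forall>x y. tF u w As x y \<longrightarrow> tF u w As y x"
  unfolding tF_def using consec_sym by metis

lemma internal_end:
  assumes cyc: "\<forall>cs. is_cycle V E cs \<longrightarrow> length cs = n" and sym: "\<forall>x y. E x y \<longrightarrow> E y x"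
    and th: "thetaS V E u w a As" and n2a: "n = 2 * a"
    and ear: "ear V E (tS u w As) (tF u w As) x L y" and x: "x \<in> set (concat As)"
  shows False
proof -
  from th have th': "u \<noteq> w" "a \<ge> 2" "length As \<ge> 3" "distinct As"
     "distinct (u # w # concat As)" "\<forall>A\<in>set As. length A = a - 1 \<and> walk E (u # A @ [w])"
     "set (u # w # concat As) \<subseteq> V"
    unfolding thetaS_def by blast+
  from ear have e: "y \<in> tS u w As" "x \<noteq> y" "walk E (x # L @ [y])" "distinct L" "set L \<subseteq> V"
    "set L \<inter> tS u w As = {}" "L = [] \<longrightarrow> \<not> tF u w As x y"
    unfolding ear_def by blast+
  obtain Ai where Ai: "Ai \<in> set As" "x \<in> set Ai" using x by auto
  obtain Aj Al where J: "Aj \<in> set As" "Al \<in> set As" "Ai \<noteq> Aj" "Ai \<noteq> Al" "Aj \<noteq> Al"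
    and yJ: "y \<in> {u, w} \<union> set Ai \<union> set Aj"
  proof (cases "\<exists>Ar\<in>set As. Ar \<noteq> Ai \<and> y \<in> set Ar")
    case True
    then obtain Ar where Ar: "Ar \<in> set As" "Ar \<noteq> Ai" "y \<in> set Ar" by blast
    obtain Al where "Al \<in> set As" "Al \<noteq> Ai" "Al \<noteq> Ar" using other_exists[OF th'(4,3) Ai(1) Ar(1)] by blast
    then show ?thesis using that[of Ar Al] Ar by auto
  next
    case False
    obtain Aj where Aj: "Aj \<in> set As" "Aj \<noteq> Ai" using other_exists[OF th'(4,3) Ai(1) Ai(1)] by blast
    obtain Al where Al: "Al \<in> set As" "Al \<noteq> Ai" "Al \<noteq> Aj" using other_exists[OF th'(4,3) Ai(1) Aj(1)] by blast
    have "y \<in> {u, w} \<union> set Ai" using e(1) False unfolding tS_def by auto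
    then show ?thesis using that[of Aj Al] Aj Al by auto
  qed
  interpret T: theta3 V E n a u w Ai Aj Al
  proof
    show "\<forall>cs. is_cycle V E cs \<longrightarrow> length cs = n" by fact
    show "\<forall>x y. E x y \<longrightarrow> E y x" by fact
    show "n = 2 * a" by fact
    show "a \<ge> 2" by fact
    show "distinct (u # w # Ai @ Aj @ Al)" using distinct_three[OF th'(5) Ai(1) J] .
    show "length Ai = a - 1" "length Aj = a - 1" "length Al = a - 1"
      "walk E (u # Ai @ [w])" "walk E (u # Aj @ [w])" "walk E (u # Al @ [w])"
      using th'(6) Ai(1) J(1,2) by auto
    show "set (u # w # Ai @ Aj @ Al) \<subseteq> V" using th'(7) Ai(1) J(1,2) by auto
  qed
  have Ld: "set L \<inter> set (u # w # Ai @ Aj @ Al) = {}"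
    using e(6) Ai(1) J(1,2) unfolding tS_def by auto
  have nc: "L = [] \<longrightarrow> \<not> consec (u # Ai @ [w]) x y" using e(7) Ai(1) unfolding tF_def by auto
  show False using T.internal_x[OF Ai(2) yJ e(2,3,4,5) Ld nc] .
qed

lemma theta_ear_ends:
  assumes cyc: "\<forall>cs. is_cycle V E cs \<longrightarrow> length cs = n" and sym: "\<forall>x y. E x y \<longrightarrow> E y x"
    and th: "thetaS V E u w a As" and n2a: "n = 2 * a"
    and ear: "ear V E (tS u w As) (tF u w As) x L y"
  shows "(x = u \<and> y = w) \<or> (x = w \<and> y = u)"
proof -
  have "x \<notin> set (concat As)" using internal_end[OF cyc sym th n2a ear] by blast
  moreover have "y \<notin> set (concat As)"
    using internal_end[OF cyc sym th n2a ear_rev[OF ear sym tF_sym]] by blast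
  moreover have "x \<in> tS u w As" "y \<in> tS u w As" "x \<noteq> y" using ear unfolding ear_def by auto
  ultimately show ?thesis unfolding tS_def by auto
qed


lemma theta_final:
  assumes sg: "simple_graph V E" and th: "thetaS V E u w a As" and SV: "tS u w As = V"
    and allF: "\<forall>x\<in>V. \<forall>y\<in>V. E x y \<longrightarrow> tF u w As x y"
  shows "is_uniform_theta V E"
proof -
  have sym: "\<forall>x y. E x y \<longrightarrow> E y x" using sg_sym[OF sg] .
  from th have th': "u \<noteq> w" "a \<ge> 2" "length As \<ge> 3" "distinct As"
     "distinct (u # w # concat As)" "\<forall>A\<in>set As. length A = a - 1 \<and> walk E (u # A @ [w])"
     "set (u # w # concat As) \<subseteq> V"
    unfolding thetaS_def by blast+
  have dc: "\<forall>ys\<in>set As. distinct ys" "\<forall>ys zs. ys \<in> set As \<and> zs \<in> set As \<and> ys \<noteq> zs \<longrightarrow> set ys \<inter> set zs = {}"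
    using th'(5) unfolding distinct.simps(2) distinct_concat_iff by blast+
  have uw: "u \<notin> set A" "w \<notin> set A" if "A \<in> set As" for A using th'(5) that by auto
  define Ps where "Ps = map (\<lambda>A. u # A @ [w]) As"
  have Psne: "Ps \<noteq> []" using th'(3) unfolding Ps_def by auto
  have Psd: "distinct Ps" unfolding Ps_def using th'(4) by (simp add: distinct_map inj_on_def)
  have Pprop: "\<forall>P\<in>set Ps. length P = a + 1 \<and> distinct P \<and> hd P = u \<and> last P = w"
    unfolding Ps_def using th'(1,2,6) dc(1) uw by auto
  have Pint: "\<forall>i < length Ps. \<forall>j < length Ps. i \<noteq> j \<longrightarrow> set (Ps ! i) \<inter> set (Ps ! j) = {u, w}"
  proof (intro allI impI)
    fix i j assume ij: "i < length Ps" "j < length Ps" "i \<noteq> j"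
    then have ij': "i < length As" "j < length As" unfolding Ps_def by auto
    then have ne: "As ! i \<noteq> As ! j" using th'(4) ij(3) by (simp add: nth_eq_iff_index_eq)
    have ini: "As ! i \<in> set As" "As ! j \<in> set As" using ij' by auto
    have "set (As ! i) \<inter> set (As ! j) = {}" using dc(2) ini ne by blast
    then show "set (Ps ! i) \<inter> set (Ps ! j) = {u, w}"
      unfolding Ps_def using ij' uw[OF ini(1)] uw[OF ini(2)] by auto
  qed
  have Vun: "V = (\<Union>P\<in>set Ps. set P)"
    using SV th'(3) unfolding tS_def Ps_def by (cases As) auto
  have Eiff: "E x y \<longleftrightarrow> (\<exists>P\<in>set Ps. \<exists>i. Suc i < length P \<and>
        ((x = P ! i \<and> y = P ! Suc i) \<or> (y = P ! i \<and> x = P ! Suc i)))" for x y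
  proof
    assume "E x y"
    then have "tF u w As x y" using allF sg_V[OF sg] by blast
    then show "\<exists>P\<in>set Ps. \<exists>i. Suc i < length P \<and> ((x = P ! i \<and> y = P ! Suc i) \<or> (y = P ! i \<and> x = P ! Suc i))"
      unfolding tF_def consec_def Ps_def by auto
  next
    assume "\<exists>P\<in>set Ps. \<exists>i. Suc i < length P \<and> ((x = P ! i \<and> y = P ! Suc i) \<or> (y = P ! i \<and> x = P ! Suc i))"
    then obtain A i where A: "A \<in> set As" "Suc i < length (u # A @ [w])"
      "(x = (u # A @ [w]) ! i \<and> y = (u # A @ [w]) ! Suc i) \<or> (y = (u # A @ [w]) ! i \<and> x = (u # A @ [w]) ! Suc i)"
      unfolding Ps_def by auto
    have "walk E (u # A @ [w])" using th'(6) A(1) by blast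
    then have "E ((u # A @ [w]) ! i) ((u # A @ [w]) ! Suc i)" using A(2) unfolding walk_nth by blast
    then show "E x y" using A(3) sym by blast
  qed
  show ?thesis unfolding is_uniform_theta_def
    apply (rule exI[of _ u], rule exI[of _ w], rule exI[of _ a], rule exI[of _ Ps])
    using th'(1,2) Psne Psd Pprop Pint Vun Eiff by auto
qed


lemma theta_grow:
  assumes sg: "simple_graph V E" and tc: "two_connected V E"
    and cyc: "\<forall>cs. is_cycle V E cs \<longrightarrow> length cs = n" and n2a: "n = 2 * a"
    and th: "thetaS V E u w a As"
  shows "is_uniform_theta V E"
  using th
proof (induction "card V - card (tS u w As)" arbitrary: As rule: less_induct)
  case less
  have sym: "\<forall>x y. E x y \<longrightarrow> E y x" using sg_sym[OF sg] .
  have finV: "finite V" using sg unfolding simple_graph_def by blast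
  from less.prems have th': "u \<noteq> w" "a \<ge> 2" "length As \<ge> 3" "distinct As"
     "distinct (u # w # concat As)" "\<forall>A\<in>set As. length A = a - 1 \<and> walk E (u # A @ [w])"
     "set (u # w # concat As) \<subseteq> V"
    unfolding thetaS_def by blast+
  have dc: "\<forall>ys\<in>set As. distinct ys"
    using th'(5) unfolding distinct.simps(2) distinct_concat_iff by blast
  have SV: "tS u w As \<subseteq> V" using th'(7) unfolding tS_def by auto
  have uS: "u \<in> tS u w As" "w \<in> tS u w As" unfolding tS_def by auto
  show ?case
  proof (cases "\<exists>x L y. ear V E (tS u w As) (tF u w As) x L y")
    case False
    then have "tS u w As = V \<and> (\<forall>x\<in>tS u w As. \<forall>y\<in>tS u w As. E x y \<longrightarrow> tF u w As x y)"
      using ear_exists[OF sg tc SV uS th'(1)] by blast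
    then show ?thesis using theta_final[OF sg less.prems] by auto
  next
    case True
    then obtain x L y where ear: "ear V E (tS u w As) (tF u w As) x L y" by blast
    obtain L' where ear': "ear V E (tS u w As) (tF u w As) u L' w"
      using theta_ear_ends[OF cyc sym less.prems n2a ear] ear ear_rev[OF ear sym tF_sym] by blast
    then have e: "walk E (u # L' @ [w])" "distinct L'" "set L' \<subseteq> V" "set L' \<inter> tS u w As = {}"
      unfolding ear_def by blast+
    obtain A where A: "A \<in> set As" using th'(3) by (cases As) auto
    have lA: "length A = a - 1" "walk E (u # A @ [w])" using th'(6) A by auto
    have "length A + length L' + 2 = n"
    proof (rule two_paths_len[OF cyc sym lA(2) e(1)])
      show "distinct (u # w # A @ L')" using th'(5) A e(2,4) dc unfolding tS_def by auto
      show "set (u # w # A @ L') \<subseteq> V" using th'(7) A e(3) by auto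
      show "A \<noteq> [] \<or> L' \<noteq> []" using lA(1) th'(2) by auto
    qed
    then have lL: "length L' = a - 1" using lA(1) n2a th'(2) by simp
    then have Lne: "L' \<noteq> []" using th'(2) by auto
    have notin: "L' \<notin> set As"
    proof
      assume "L' \<in> set As"
      then have "set L' \<subseteq> tS u w As" unfolding tS_def set_concat by (intro Un_upper2[THEN subset_trans[rotated]]) auto
      then have "set L' \<inter> tS u w As = set L'" by (rule Int_absorb2)
      then have "set L' = {}" using e(4) by simp
      then show False using Lne by simp
    qed
    have Ld: "u \<notin> set L'" "w \<notin> set L'" "set L' \<inter> set (concat As) = {}"
      using e(4) unfolding tS_def by auto
    have d2: "distinct (u # w # concat (L' # As))"
    proof -
      have "distinct (concat (L' # As))" using th'(5) e(2) Ld(3) by simp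
      then show ?thesis using th'(1,5) Ld(1,2) by simp
    qed
    have th2: "thetaS V E u w a (L' # As)"
      unfolding thetaS_def
    proof (intro conjI)
      show "3 \<le> length (L' # As)" using th'(3) by simp
      show "distinct (L' # As)" using th'(4) notin by simp
      show "\<forall>A\<in>set (L' # As). length A = a - 1 \<and> walk E (u # A @ [w])" using th'(6) lL e(1) by simp
      show "set (u # w # concat (L' # As)) \<subseteq> V" using th'(7) e(3) by simp
    qed (use th'(1,2) d2 in auto)
    have S2: "tS u w (L' # As) = tS u w As \<union> set L'" unfolding tS_def by auto
    have "card (tS u w As) < card (tS u w (L' # As))"
    proof -
      have "finite (tS u w As)" unfolding tS_def by simp
      moreover have "set L' \<noteq> {}" using Lne by simp
      moreover have "card (tS u w As \<union> set L') = card (tS u w As) + card (set L')"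
        using calculation(1) e(4) by (intro card_Un_disjoint) auto
      moreover have "card (set L') > 0" using Lne by (simp add: card_gt_0_iff)
      ultimately show ?thesis unfolding S2 by simp
    qed
    moreover have "card (tS u w (L' # As)) \<le> card V"
      using card_mono[OF finV] SV e(3) unfolding S2 by auto
    ultimately have "card V - card (tS u w (L' # As)) < card V - card (tS u w As)" by simp
    then show ?thesis using less.hyps th2 by blast
  qed
qed


lemma from_cycle:
  assumes sg: "simple_graph V E" and tc: "two_connected V E"
    and cyc: "\<forall>cs. is_cycle V E cs \<longrightarrow> length cs = n" and C: "is_cycle V E C"
  shows "is_cycle_graph V E \<or> is_uniform_theta V E"
proof -
  have sym: "\<forall>x y. E x y \<longrightarrow> E y x" using sg_sym[OF sg] .
  have Cp: "length C \<ge> 3" "distinct C" "set C \<subseteq> V" "\<forall>i < length C. E (C ! i) (C ! ((i + 1) mod length C))"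
    using C unfolding is_cycle_def by blast+
  show ?thesis
  proof (cases "\<exists>x L y. ear V E (set C) (cedge C) x L y")
    case False
    have c01: "C ! 0 \<in> set C" "C ! 1 \<in> set C" "C ! 0 \<noteq> C ! 1"
    proof -
      show "C ! 0 \<in> set C" "C ! 1 \<in> set C" using Cp(1) by (auto intro!: nth_mem)
      have "0 < length C" "1 < length C" using Cp(1) by auto
      then show "C ! 0 \<noteq> C ! 1" using nth_eq_iff_index_eq[OF Cp(2), of 0 1] by simp
    qed
    have H: "set C = V \<and> (\<forall>x\<in>set C. \<forall>y\<in>set C. E x y \<longrightarrow> cedge C x y)"
      using ear_exists[OF sg tc Cp(3) c01] False by blast
    have "E x y \<longleftrightarrow> cedge C x y" for x y
    proof
      assume "E x y" then show "cedge C x y" using H sg_V[OF sg] by blast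
    next
      assume "cedge C x y"
      then obtain i where i: "i < length C" "(x = C ! i \<and> y = C ! ((i + 1) mod length C)) \<or>
          (y = C ! i \<and> x = C ! ((i + 1) mod length C))" unfolding cedge_def by blast
      then show "E x y" using Cp(4) sym by blast
    qed
    then have "is_cycle_graph V E"
      unfolding is_cycle_graph_def cedge_def using Cp(1,2) H by (intro exI[of _ C]) auto
    then show ?thesis by blast
  next
    case True
    then obtain x L y where ear: "ear V E (set C) (cedge C) x L y" by blast
    then have e: "x \<in> set C" "y \<in> set C" "x \<noteq> y" "walk E (x # L @ [y])" "distinct L" "set L \<subseteq> V"
      "set L \<inter> set C = {}" "L = [] \<longrightarrow> \<not> cedge C x y" unfolding ear_def by blast+
    obtain m where m: "m < length C" "C ! m = x" using e(1) by (auto simp: in_set_conv_nth)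
    have Cne: "C \<noteq> []" using Cp(1) by auto
    have hd: "hd (rotate m C) = x" using hd_rotate_conv_nth[OF Cne, of m] m by simp
    obtain R where R: "rotate m C = x # R"
      using hd Cne by (metis list.collapse length_rotate list.size(3) Cp(1) not_numeral_le_zero)
    have "y \<in> set (x # R)" using e(2) R[symmetric] by (metis set_rotate)
    then have "y \<in> set R" using e(3) by simp
    then obtain A B where AB: "R = A @ y # B" by (meson split_list)
    let ?C' = "x # A @ y # B"
    have rC: "rotate m C = ?C'" using R AB by simp
    have C': "is_cycle V E ?C'" using is_cycle_rotate[OF C, of m] rC by simp
    then have C'p: "length ?C' \<ge> 3" "distinct ?C'" "set ?C' \<subseteq> V" "walk E ?C'" "E (last ?C') (hd ?C')"
      unfolding is_cycle_alt by blast+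
    have sC': "set ?C' = set C" using rC[symmetric] by (metis set_rotate)
    have wAB: "walk E (x # A @ [y])" "walk E (y # B)" using walk_split[THEN iffD1, OF C'p(4)] by auto
    have "walk E ((y # B) @ [x])"
      using wAB(2) C'p(5) by (simp only: walk_append) (auto simp: last_append)
    then have "walk E (y # B @ [x])" by simp
    then have wB: "walk E (x # rev B @ [y])" using walk_rev_path[OF sym] by blast
    have e1: "length A + length (rev B) + 2 = n"
    proof (rule two_paths_len[OF cyc sym wAB(1) wB])
      show "distinct (x # y # A @ rev B)" using C'p(2) by auto
      show "set (x # y # A @ rev B) \<subseteq> V" using C'p(3) by auto
      show "A \<noteq> [] \<or> rev B \<noteq> []" using C'p(1) by auto
    qed
    have e2: "length A + length L + 2 = n"
    proof (rule two_paths_len[OF cyc sym wAB(1) e(4)])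
      show "distinct (x # y # A @ L)" using C'p(2) e(5,7) sC' by auto
      show "set (x # y # A @ L) \<subseteq> V" using C'p(3) e(6) by auto
      show "A \<noteq> [] \<or> L \<noteq> []"
      proof (rule ccontr)
        assume "\<not> (A \<noteq> [] \<or> L \<noteq> [])"
        then have "A = []" "L = []" by simp_all
        then have "cedge C x y" using cedge_rot1[of m C x y B] rC by simp
        then show False using e(8) \<open>L = []\<close> by simp
      qed
    qed
    have e3: "length (rev B) + length L + 2 = n"
    proof (rule two_paths_len[OF cyc sym wB e(4)])
      show "distinct (x # y # rev B @ L)" using C'p(2) e(5,7) sC' by auto
      show "set (x # y # rev B @ L) \<subseteq> V" using C'p(3) e(6) by auto
      show "rev B \<noteq> [] \<or> L \<noteq> []"
      proof (rule ccontr)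
        assume "\<not> (rev B \<noteq> [] \<or> L \<noteq> [])"
        then have "B = []" "L = []" by simp_all
        then have "cedge C x y" using cedge_rot2[of m C x A y] rC by simp
        then show False using e(8) \<open>L = []\<close> by simp
      qed
    qed
    define a where "a = length L + 1"
    have lens: "length A = a - 1" "length (rev B) = a - 1" "length L = a - 1" "n = 2 * a"
      using e1 e2 e3 unfolding a_def by auto
    have a2: "a \<ge> 2" using C'p(1) e1 lens by simp
    have ne: "A \<noteq> []" "rev B \<noteq> []" "L \<noteq> []" using lens a2 by auto
    have dall: "distinct (x # y # A @ rev B @ L)" using C'p(2) e(5,7) sC' by auto
    have dAs: "distinct [A, rev B, L]"
    proof -
      have "set A \<inter> set (rev B) = {}" "set A \<inter> set L = {}" "set (rev B) \<inter> set L = {}"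
        using dall by auto
      then show ?thesis using ne by auto
    qed
    have "thetaS V E x y a [A, rev B, L]"
      unfolding thetaS_def using e(3) a2 dAs dall lens wAB(1) wB e(4) C'p(3) e(6) by auto
    then have "is_uniform_theta V E" using theta_grow[OF sg tc cyc lens(4)] by blast
    then show ?thesis by blast
  qed
qed


lemma idx_inv1: "(i::nat) < n \<Longrightarrow> (i + 1) mod n = k \<Longrightarrow> i = (k + n - 1) mod n"
proof -
  assume a: "i < n" "(i + 1) mod n = k"
  then have k: "k = (if Suc i = n then 0 else Suc i)" using mod_Suc_if[OF a(1)] by simp
  then have "k < n" using a by auto
  then show ?thesis using mod_pred_if[OF \<open>k < n\<close>] k by auto
qed

lemma idx_inv2: "(m::nat) < n \<Longrightarrow> k = (m + n - 1) mod n \<Longrightarrow> m = (k + 1) mod n"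
proof -
  assume a: "m < n" "k = (m + n - 1) mod n"
  then have k: "k = (if m = 0 then n - 1 else m - 1)" using mod_pred_if[OF a(1)] by simp
  then have "k < n" using a by auto
  then show ?thesis using mod_Suc_if[OF \<open>k < n\<close>] k a(1) by auto
qed

lemma idx_back: "(k::nat) < n \<Longrightarrow> ((k + n - 1) mod n + 1) mod n = k"
  using idx_inv2[of k n "(k + n - 1) mod n"] by simp

lemma idx_ne: "(n::nat) \<ge> 3 \<Longrightarrow> k < n \<Longrightarrow> (k + 1) mod n \<noteq> (k + n - 1) mod n"
proof -
  assume n: "n \<ge> 3" "k < n"
  have A: "(k + 1) mod n = (if Suc k = n then 0 else Suc k)" using mod_Suc_if[OF n(2)] by simp
  have B: "(k + n - 1) mod n = (if k = 0 then n - 1 else k - 1)" using mod_pred_if[OF n(2)] .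
  show ?thesis unfolding A B using n by auto
qed

lemma cyc_nb:
  assumes C: "is_cycle V E cs" and sym: "\<forall>x y. E x y \<longrightarrow> E y x" and k: "k < length cs"
  shows "E (cs ! k) (cs ! ((k + 1) mod length cs))" "E (cs ! k) (cs ! ((k + length cs - 1) mod length cs))"
    "cs ! ((k + 1) mod length cs) \<noteq> cs ! ((k + length cs - 1) mod length cs)"
proof -
  let ?n = "length cs"
  have Cp: "?n \<ge> 3" "distinct cs" "\<forall>i < ?n. E (cs ! i) (cs ! ((i + 1) mod ?n))"
    using C unfolding is_cycle_def by blast+
  show "E (cs ! k) (cs ! ((k + 1) mod ?n))" using Cp(3) k by blast
  have j: "(k + ?n - 1) mod ?n < ?n" using k by (intro mod_less_divisor) auto
  have "E (cs ! ((k + ?n - 1) mod ?n)) (cs ! k)"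
    using Cp(3)[rule_format, OF j] idx_back[OF k] by simp
  then show "E (cs ! k) (cs ! ((k + ?n - 1) mod ?n))" using sym by blast
  have "(k + 1) mod ?n < ?n" using k by (intro mod_less_divisor) auto
  then show "cs ! ((k + 1) mod ?n) \<noteq> cs ! ((k + ?n - 1) mod ?n)"
    using nth_eq_iff_index_eq[OF Cp(2) _ j] idx_ne[OF Cp(1) k] by simp
qed

lemma cyc_closed:
  assumes C: "is_cycle V E cs" and sym: "\<forall>x y. E x y \<longrightarrow> E y x" and k: "k < length cs"
    and deg: "\<forall>y. E (cs ! k) y \<longrightarrow> y = p \<or> y = q" and y: "E (cs ! k) y"
  shows "y = cs ! ((k + 1) mod length cs) \<or> y = cs ! ((k + length cs - 1) mod length cs)"
proof -
  note nb = cyc_nb[OF C sym k]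
  have "cs ! ((k + 1) mod length cs) \<in> {p, q}" "cs ! ((k + length cs - 1) mod length cs) \<in> {p, q}"
    using deg nb(1,2) by auto
  moreover have "y \<in> {p, q}" using deg y by auto
  ultimately show ?thesis using nb(3) by auto
qed

lemma cyc_closed_set:
  assumes C: "is_cycle V E cs" and sym: "\<forall>x y. E x y \<longrightarrow> E y x" and v: "v \<in> set cs"
    and deg: "\<forall>y. E v y \<longrightarrow> y = p \<or> y = q" and y: "E v y"
  shows "y \<in> set cs"
proof -
  obtain k where k: "k < length cs" "cs ! k = v" using v by (auto simp: in_set_conv_nth)
  then have "y = cs ! ((k + 1) mod length cs) \<or> y = cs ! ((k + length cs - 1) mod length cs)"
    using cyc_closed[OF C sym k(1), of p q y] deg y by simp
  moreover have "(k + 1) mod length cs < length cs" "(k + length cs - 1) mod length cs < length cs"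
    using k by (intro mod_less_divisor; auto)+
  ultimately show ?thesis by auto
qed

lemma deg2_len:
  assumes sg: "simple_graph V E" and con: "connected_on V E"
    and deg: "\<forall>v\<in>V. \<exists>p q. \<forall>y. E v y \<longrightarrow> y = p \<or> y = q" and C: "is_cycle V E cs"
  shows "length cs = card V"
proof -
  have sym: "\<forall>x y. E x y \<longrightarrow> E y x" using sg_sym[OF sg] .
  have Cp: "length cs \<ge> 3" "distinct cs" "set cs \<subseteq> V" using C unfolding is_cycle_def by blast+
  have clo: "y \<in> set cs" if "v \<in> set cs" "E v y" for v y
  proof -
    have vV: "v \<in> V" using Cp(3) that(1) by (rule subsetD)
    from bspec[OF deg vV] obtain p q where "\<forall>y. E v y \<longrightarrow> y = p \<or> y = q" by blast
    then show ?thesis using cyc_closed_set[OF C sym that(1) _ that(2)] by blast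
  qed
  have c0: "cs ! 0 \<in> set cs" using Cp(1) by (auto intro!: nth_mem)
  have "y \<in> set cs" if "y \<in> V" for y
  proof -
    have cV: "\<forall>x\<in>V. \<forall>y\<in>V. (\<lambda>a b. E a b \<and> a \<in> V \<and> b \<in> V)\<^sup>*\<^sup>* x y"
      using con[unfolded connected_on_def, THEN conjunct2] .
    have c0V: "cs ! 0 \<in> V" using c0 Cp(3) by blast
    have "(\<lambda>a b. E a b \<and> a \<in> V \<and> b \<in> V)\<^sup>*\<^sup>* (cs ! 0) y"
      using cV[rule_format, OF c0V that] .
    then show ?thesis
    proof (induction rule: rtranclp_induct)
      case base then show ?case using c0 .
    next
      case (step b c)
      from step.hyps(2) have "E b c" by simp
      then show ?case using clo[OF step.IH] by simp
    qed
  qed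
  then have "V \<subseteq> set cs" by (rule subsetI)
  then have "set cs = V" using Cp(3) by (rule subset_antisym[rotated])
  then show ?thesis using distinct_card[OF Cp(2)] by simp
qed

lemma cycle_graph_deg:
  assumes "is_cycle_graph V E"
  shows "\<forall>v\<in>V. \<exists>p q. \<forall>y. E v y \<longrightarrow> y = p \<or> y = q"
proof
  fix v assume v: "v \<in> V"
  from assms obtain xs where xs: "length xs \<ge> 3" "distinct xs" "set xs = V"
    "\<forall>x y. E x y \<longleftrightarrow> (\<exists>i < length xs. (x = xs ! i \<and> y = xs ! ((i + 1) mod length xs)) \<or>
        (y = xs ! i \<and> x = xs ! ((i + 1) mod length xs)))"
    unfolding is_cycle_graph_def by blast
  let ?N = "length xs"
  obtain k where k: "k < ?N" "xs ! k = v" using v xs(3) by (auto simp: in_set_conv_nth)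
  have "y = xs ! ((k + 1) mod ?N) \<or> y = xs ! ((k + ?N - 1) mod ?N)" if "E v y" for y
  proof -
    obtain i where i: "i < ?N" "(v = xs ! i \<and> y = xs ! ((i + 1) mod ?N)) \<or> (y = xs ! i \<and> v = xs ! ((i + 1) mod ?N))"
      using xs(4) \<open>E v y\<close> by blast
    have i1: "(i + 1) mod ?N < ?N" using i(1) by (intro mod_less_divisor) auto
    show ?thesis
    proof (cases "v = xs ! i \<and> y = xs ! ((i + 1) mod ?N)")
      case True
      then have "i = k" using nth_eq_iff_index_eq[OF xs(2) i(1) k(1)] k(2) by simp
      then show ?thesis using True by simp
    next
      case False
      then have "y = xs ! i" "v = xs ! ((i + 1) mod ?N)" using i(2) by auto
      then have "(i + 1) mod ?N = k" using nth_eq_iff_index_eq[OF xs(2) i1 k(1)] k(2) by simp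
      then have "i = (k + ?N - 1) mod ?N" using idx_inv1[OF i(1)] by simp
      then show ?thesis using \<open>y = xs ! i\<close> by simp
    qed
  qed
  then show "\<exists>p q. \<forall>y. E v y \<longrightarrow> y = p \<or> y = q" by blast
qed

lemma theta_cycle_len:
  assumes sg: "simple_graph V E" and tc: "two_connected V E"
    and uw: "u \<noteq> w" and a1: "a \<ge> 1" and Psne: "Ps \<noteq> []"
    and PP: "\<forall>P\<in>set Ps. length P = a + 1 \<and> distinct P \<and> hd P = u \<and> last P = w"
    and PI: "\<forall>i < length Ps. \<forall>j < length Ps. i \<noteq> j \<longrightarrow> set (Ps ! i) \<inter> set (Ps ! j) = {u, w}"
    and VU: "V = (\<Union>P\<in>set Ps. set P)"
    and EI: "\<forall>x y. E x y \<longleftrightarrow> (\<exists>P\<in>set Ps. \<exists>i. Suc i < length P \<and>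
        ((x = P ! i \<and> y = P ! Suc i) \<or> (y = P ! i \<and> x = P ! Suc i)))"
    and C: "is_cycle V E cs"
  shows "length cs = 2 * a"
proof -
  have sym: "\<forall>x y. E x y \<longrightarrow> E y x" using sg_sym[OF sg] .
  have Pl: "length P = a + 1" "distinct P" if "P \<in> set Ps" for P using PP that by auto
  have P0: "P ! 0 = u" "P ! a = w" if PS: "P \<in> set Ps" for P
  proof -
    have "P \<noteq> []" using Pl(1)[OF PS] by auto
    then show "P ! 0 = u" "P ! a = w" using PP PS Pl(1)[OF PS] by (auto simp: hd_conv_nth last_conv_nth)
  qed
  have Pint: "set P \<inter> set Q = {u, w}" if PQ: "P \<in> set Ps" "Q \<in> set Ps" "P \<noteq> Q" for P Q
  proof -
    obtain i where i: "i < length Ps" "Ps ! i = P" using PQ(1) by (auto simp: in_set_conv_nth)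
    obtain j where j: "j < length Ps" "Ps ! j = Q" using PQ(2) by (auto simp: in_set_conv_nth)
    have "i \<noteq> j" using i j PQ(3) by auto
    then show ?thesis using PI i j by auto
  qed
  have cardV: "card V > 2" using tc unfolding two_connected_def by blast
  have a2: "a \<ge> 2"
  proof (rule ccontr)
    assume "\<not> a \<ge> 2"
    then have a: "a = 1" using a1 by simp
    have sub: "set P \<subseteq> {u, w}" if PS: "P \<in> set Ps" for P
    proof
      fix v assume "v \<in> set P"
      then obtain i where "i < length P" "v = P ! i" by (auto simp: in_set_conv_nth)
      then have "i = 0 \<or> i = a" using Pl(1)[OF PS] a by auto
      then show "v \<in> {u, w}" using P0[OF PS] \<open>v = P ! i\<close> by auto
    qed
    have "V \<subseteq> {u, w}" unfolding VU using sub by (intro UN_least)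
    then have "card V \<le> card {u, w}" by (intro card_mono) auto
    also have "\<dots> \<le> 2" by (simp add: card_insert_if)
    finally show False using cardV by simp
  qed
  have T1e: "E (P ! i) (P ! Suc i)" if PS: "P \<in> set Ps" and iS: "Suc i < a + 1" for P i
  proof -
    have "Suc i < length P" using Pl(1)[OF PS] iS by simp
    then show ?thesis using EI PS by blast
  qed
  have T1: "y = P ! (j - 1) \<or> y = P ! Suc j" if P: "P \<in> set Ps" and j: "0 < j" "j < a" and e: "E (P ! j) y" for P j y
  proof -
    obtain Q i where Q: "Q \<in> set Ps" "Suc i < length Q"
      "(P ! j = Q ! i \<and> y = Q ! Suc i) \<or> (y = Q ! i \<and> P ! j = Q ! Suc i)"
      using EI e by blast
    have lP: "length P = a + 1" using Pl(1)[OF P] .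
    have "P ! j \<in> set Q" using Q(2,3) by (auto intro!: nth_mem)
    moreover have "P ! j \<noteq> u" "P ! j \<noteq> w"
      using nth_eq_iff_index_eq[OF Pl(2)[OF P], of j 0] nth_eq_iff_index_eq[OF Pl(2)[OF P], of j a]
        P0[OF P] j lP by auto
    moreover have "P ! j \<in> set P" using j lP by (auto intro!: nth_mem)
    ultimately have QP: "Q = P" using Pint[OF P Q(1)] by blast
    show ?thesis
    proof (cases "P ! j = Q ! i \<and> y = Q ! Suc i")
      case True
      then have "i = j" using nth_eq_iff_index_eq[OF Pl(2)[OF P], of i j] QP Q(2) j lP by auto
      then show ?thesis using True QP by simp
    next
      case False
      then have "y = P ! i" "P ! j = P ! Suc i" using Q(3) QP by auto
      then have "Suc i = j" using nth_eq_iff_index_eq[OF Pl(2)[OF P], of "Suc i" j] Q(2) QP j lP by auto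
      then show ?thesis using \<open>y = P ! i\<close> by auto
    qed
  qed
  have T2: "\<exists>P\<in>set Ps. y = P ! 1" if e: "E u y" for y
  proof -
    obtain Q i where Q: "Q \<in> set Ps" "Suc i < length Q"
      "(u = Q ! i \<and> y = Q ! Suc i) \<or> (y = Q ! i \<and> u = Q ! Suc i)"
      using EI e by blast
    have q0: "0 < length Q" "i < length Q" using Q(2) by auto
    have i0: "Q ! i = u \<Longrightarrow> i = 0" using nth_eq_iff_index_eq[OF Pl(2)[OF Q(1)] q0(2) q0(1)] P0[OF Q(1)] by auto
    have i1: "Q ! Suc i \<noteq> u" using nth_eq_iff_index_eq[OF Pl(2)[OF Q(1)] Q(2) q0(1)] P0[OF Q(1)] by auto
    have "u = Q ! i \<and> y = Q ! Suc i" using Q(3) i1 by auto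
    then show ?thesis using i0 Q(1) by auto
  qed
  have T3: "v = u \<or> v = w \<or> (\<exists>P\<in>set Ps. \<exists>j. 0 < j \<and> j < a \<and> v = P ! j)" if vV: "v \<in> V" for v
  proof -
    obtain P where P: "P \<in> set Ps" "v \<in> set P" using vV VU by auto
    then obtain j where j: "j < a + 1" "v = P ! j" using Pl(1)[OF P(1)] by (auto simp: in_set_conv_nth)
    show ?thesis
    proof (cases "j = 0 \<or> j = a")
      case True then show ?thesis using P0[OF P(1)] j by auto
    next
      case False
      then have "0 < j" "j < a" using j(1) by auto
      then show ?thesis using P(1) j(2) by blast
    qed
  qed
  let ?n = "length cs"
  have Cp: "?n \<ge> 3" "distinct cs" "set cs \<subseteq> V" using C unfolding is_cycle_def by blast+
  have clo: "P ! (j - 1) \<in> set cs \<and> P ! Suc j \<in> set cs"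
    if P: "P \<in> set Ps" and j: "0 < j" "j < a" and inn: "P ! j \<in> set cs" for P j
  proof -
    have deg: "\<forall>y. E (P ! j) y \<longrightarrow> y = P ! (j - 1) \<or> y = P ! Suc j" using T1[OF P j] by blast
    have e1: "E (P ! j) (P ! Suc j)" using T1e[OF P] j by simp
    have "E (P ! (j - 1)) (P ! Suc (j - 1))" using T1e[OF P, of "j - 1"] j by simp
    then have e2: "E (P ! j) (P ! (j - 1))" using sym j by simp
    show ?thesis using cyc_closed_set[OF C sym inn deg e1] cyc_closed_set[OF C sym inn deg e2] by blast
  qed
  have PC: "P ! i \<in> set cs" if P: "P \<in> set Ps" and j: "0 < j" "j < a" and inn: "P ! j \<in> set cs" and i: "i \<le> a"
    for P j i
  proof -
    have down: "P ! (j - d) \<in> set cs" if "d \<le> j" for d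
      using that
    proof (induction d)
      case 0 then show ?case using inn by simp
    next
      case (Suc d)
      then have in1: "P ! (j - d) \<in> set cs" by simp
      have "0 < j - d" "j - d < a" using Suc.prems j by auto
      from clo[OF P this in1] have "P ! (j - d - 1) \<in> set cs" by (rule conjunct1)
      moreover have "j - d - 1 = j - Suc d" by simp
      ultimately show ?case by simp
    qed
    have up: "P ! (j + d) \<in> set cs" if "j + d \<le> a" for d
      using that
    proof (induction d)
      case 0 then show ?case using inn by simp
    next
      case (Suc d)
      then have in1: "P ! (j + d) \<in> set cs" by simp
      have "0 < j + d" "j + d < a" using Suc.prems j by auto
      from clo[OF P this in1] have "P ! Suc (j + d) \<in> set cs" by (rule conjunct2)
      then show ?case by simp
    qed
    show ?thesis
    proof (cases "i \<le> j")
      case True then show ?thesis using down[of "j - i"] by simp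
    next
      case False then show ?thesis using up[of "i - j"] i by simp
    qed
  qed
  have Pset: "set P \<subseteq> set cs" if P: "P \<in> set Ps" and j: "0 < j" "j < a" and inn: "P ! j \<in> set cs" for P j
  proof
    fix v assume "v \<in> set P"
    then obtain i where "i < a + 1" "v = P ! i" using Pl(1)[OF P] by (auto simp: in_set_conv_nth)
    then show "v \<in> set cs" using PC[OF P j inn, of i] by simp
  qed
  obtain z where z: "z \<in> set cs" "z \<noteq> u" "z \<noteq> w"
  proof (rule ccontr)
    assume nt: "\<not> thesis"
    have "set cs \<subseteq> {u, w}"
    proof
      fix v assume "v \<in> set cs"
      then show "v \<in> {u, w}" using that nt by auto
    qed
    then have "card (set cs) \<le> card {u, w}" by (intro card_mono) auto
    also have "\<dots> \<le> 2" by (simp add: card_insert_if)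
    finally show False using distinct_card[OF Cp(2)] Cp(1) by simp
  qed
  have "z \<in> V" using z(1) Cp(3) by (rule subsetD[rotated])
  then obtain P0' j0 where P0': "P0' \<in> set Ps" "0 < j0" "j0 < a" "z = P0' ! j0" using T3 z(2,3) by blast
  have "P0' ! 0 \<in> set cs" using PC[OF P0'(1,2,3), of 0] P0'(4) z(1) by simp
  then have "u \<in> set cs" using P0[OF P0'(1)] by simp
  then obtain k where k: "k < ?n" "cs ! k = u" by (auto simp: in_set_conv_nth)
  define s where "s = cs ! ((k + 1) mod ?n)"
  define t where "t = cs ! ((k + ?n - 1) mod ?n)"
  have st: "E u s" "E u t" "s \<noteq> t" using cyc_nb[OF C sym k(1)] k(2) unfolding s_def t_def by auto
  have "(k + 1) mod ?n < ?n" "(k + ?n - 1) mod ?n < ?n" using k(1) by (intro mod_less_divisor; auto)+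
  then have sin: "s \<in> set cs" "t \<in> set cs" unfolding s_def t_def by (auto intro!: nth_mem)
  obtain Q1 where Q1: "Q1 \<in> set Ps" "s = Q1 ! 1" using T2[OF st(1)] by blast
  obtain Q2 where Q2: "Q2 \<in> set Ps" "t = Q2 ! 1" using T2[OF st(2)] by blast
  have Q12: "Q1 \<noteq> Q2" using Q1 Q2 st(3) by auto
  have sQ1: "set Q1 \<subseteq> set cs" using Pset[OF Q1(1), of 1] a2 sin(1) Q1(2) by simp
  have sQ2: "set Q2 \<subseteq> set cs" using Pset[OF Q2(1), of 1] a2 sin(2) Q2(2) by simp
  have uQ: "u \<in> set Q1" "w \<in> set Q1"
  proof -
    have "0 < length Q1" "a < length Q1" using Pl(1)[OF Q1(1)] by auto
    then show "u \<in> set Q1" "w \<in> set Q1" using P0[OF Q1(1)] nth_mem by metis+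
  qed
  have sub: "set cs \<subseteq> set Q1 \<union> set Q2"
  proof
    fix v assume v: "v \<in> set cs"
    then have "v \<in> V" using Cp(3) by (rule subsetD[rotated])
    then have vc: "v = u \<or> v = w \<or> (\<exists>P\<in>set Ps. \<exists>j. 0 < j \<and> j < a \<and> v = P ! j)" by (rule T3)
    show "v \<in> set Q1 \<union> set Q2"
    proof (cases "v = u \<or> v = w")
      case True then show ?thesis using uQ by auto
    next
      case False
      then obtain P j where PJ: "P \<in> set Ps" "0 < j" "j < a" "v = P ! j" using vc by blast
      show ?thesis
      proof (cases "P = Q1 \<or> P = Q2")
        case True
        have "j < length P" using PJ(3) Pl(1)[OF PJ(1)] by simp
        then have "v \<in> set P" using PJ(4) by simp
        then show ?thesis using True by auto
      next
        case False
        have vin: "P ! j \<in> set cs" using v PJ(4) by simp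
        have P1: "P ! 1 \<in> set cs" using PC[OF PJ(1,2,3) vin, of 1] a2 by simp
        then obtain m where m: "m < ?n" "cs ! m = P ! 1" by (auto simp: in_set_conv_nth)
        have deg: "\<forall>y. E (cs ! m) y \<longrightarrow> y = P ! (1 - 1) \<or> y = P ! Suc 1"
          using T1[OF PJ(1), of 1] a2 m(2) by auto
        have "E (P ! 0) (P ! Suc 0)" using T1e[OF PJ(1), of 0] a2 by simp
        then have "E (cs ! m) u" using m(2) P0[OF PJ(1)] sym by auto
        then have "u = cs ! ((m + 1) mod ?n) \<or> u = cs ! ((m + ?n - 1) mod ?n)"
          using cyc_closed[OF C sym m(1) deg] by blast
        moreover have mi: "(m + 1) mod ?n < ?n" "(m + ?n - 1) mod ?n < ?n" using m(1) by (intro mod_less_divisor; auto)+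
        ultimately have "k = (m + 1) mod ?n \<or> k = (m + ?n - 1) mod ?n"
          using nth_eq_iff_index_eq[OF Cp(2) k(1) mi(1)] nth_eq_iff_index_eq[OF Cp(2) k(1) mi(2)] k(2) by auto
        then have "m = (k + ?n - 1) mod ?n \<or> m = (k + 1) mod ?n"
          using idx_inv1[OF m(1)] idx_inv2[OF m(1)] by auto
        then have "P ! 1 = t \<or> P ! 1 = s" using m(2) unfolding s_def t_def by auto
        moreover have "P ! 1 \<in> set P" "Q1 ! 1 \<in> set Q1" "Q2 ! 1 \<in> set Q2"
          using Pl(1)[OF PJ(1)] Pl(1)[OF Q1(1)] Pl(1)[OF Q2(1)] a2 by auto
        ultimately have "P ! 1 \<in> set P \<inter> set Q1 \<or> P ! 1 \<in> set P \<inter> set Q2"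
          using Q1(2) Q2(2) by auto
        then have "P ! 1 \<in> {u, w}" using Pint[OF PJ(1) Q1(1)] Pint[OF PJ(1) Q2(1)] False by auto
        moreover have "P ! 1 \<noteq> u" "P ! 1 \<noteq> w"
        proof -
          have l: "0 < length P" "1 < length P" "a < length P" using Pl(1)[OF PJ(1)] a2 by auto
          show "P ! 1 \<noteq> u" using nth_eq_iff_index_eq[OF Pl(2)[OF PJ(1)] l(2) l(1)] P0[OF PJ(1)] by auto
          show "P ! 1 \<noteq> w" using nth_eq_iff_index_eq[OF Pl(2)[OF PJ(1)] l(2) l(3)] P0[OF PJ(1)] a2 by auto
        qed
        ultimately show ?thesis by simp
      qed
    qed
  qed
  have eqs: "set cs = set Q1 \<union> set Q2" using sub sQ1 sQ2 by blast
  have "card (set Q1) + card (set Q2) = card (set Q1 \<union> set Q2) + card (set Q1 \<inter> set Q2)"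
    by (rule card_Un_Int) auto
  moreover have "card (set Q1) = a + 1" "card (set Q2) = a + 1"
    using distinct_card Pl[OF Q1(1)] Pl[OF Q2(1)] by metis+
  moreover have "card (set Q1 \<inter> set Q2) = 2" using Pint[OF Q1(1) Q2(1) Q12] uw by simp
  ultimately have "card (set cs) = 2 * a" unfolding eqs by simp
  then show ?thesis using distinct_card[OF Cp(2)] by simp
qed

lemma cycle_exists:
  assumes sg: "simple_graph V E" and tc: "two_connected V E"
  shows "\<exists>cs. is_cycle V E cs"
proof -
  have sym: "\<forall>x y. E x y \<longrightarrow> E y x" using sg_sym[OF sg] .
  have cV: "card V > 2" and con: "connected_on V E" using tc unfolding two_connected_def by blast+
  have finV: "finite V" using sg unfolding simple_graph_def by blast
  have "V \<noteq> {}" using cV by auto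
  then obtain v where v: "v \<in> V" by blast
  have "\<not> V \<subseteq> {v}"
  proof
    assume "V \<subseteq> {v}"
    then have "card V \<le> card {v}" by (intro card_mono) auto
    then show False using cV by simp
  qed
  then obtain v' where v': "v' \<in> V" "v' \<noteq> v" by blast
  have cVV: "\<forall>x\<in>V. \<forall>y\<in>V. (\<lambda>a b. E a b \<and> a \<in> V \<and> b \<in> V)\<^sup>*\<^sup>* x y"
    using con[unfolded connected_on_def, THEN conjunct2] .
  have R: "(\<lambda>a b. E a b \<and> a \<in> V \<and> b \<in> V)\<^sup>*\<^sup>* v v'" using cVV[rule_format, OF v v'(1)] .
  obtain z where "E v z \<and> v \<in> V \<and> z \<in> V"
    using R
  proof (cases rule: converse_rtranclpE)
    case base then show ?thesis using v'(2) by simp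
  next
    case (step z')
    then show ?thesis using that by blast
  qed
  then have vz: "E v z" "z \<in> V" by auto
  have vnz: "v \<noteq> z" using sg_irrefl[OF sg vz(1)] .
  define F where "F = (\<lambda>a b. (a = v \<and> b = z) \<or> (a = z \<and> b = v))"
  have SV: "{v, z} \<subseteq> V" using v vz by auto
  have "{v, z} \<noteq> V"
  proof
    assume "{v, z} = V"
    then have "card V = 2" using vnz by auto
    then show False using cV by simp
  qed
  then have nt: "\<not> ({v, z} = V \<and> (\<forall>x\<in>{v, z}. \<forall>y\<in>{v, z}. E x y \<longrightarrow> F x y))" by simp
  have vin: "v \<in> {v, z}" "z \<in> {v, z}" by simp_all
  obtain x L y where ear: "ear V E {v, z} F x L y"
    using ear_exists[OF sg tc SV vin vnz nt] by blast
  then have e: "x \<in> {v, z}" "y \<in> {v, z}" "x \<noteq> y" "walk E (x # L @ [y])" "distinct L" "set L \<subseteq> V"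
    "set L \<inter> {v, z} = {}" "L = [] \<longrightarrow> \<not> F x y" unfolding ear_def by blast+
  have Fxy: "F x y" using e(1,2,3) unfolding F_def by auto
  then have Lne: "L \<noteq> []" using e(8) by blast
  have Exy: "E y x" using Fxy vz(1) sym unfolding F_def by auto
  have "is_cycle V E (x # L @ [y])"
    unfolding is_cycle_alt
  proof (intro conjI)
    show "3 \<le> length (x # L @ [y])" using Lne by (cases L) auto
    show "distinct (x # L @ [y])" using e(1,2,3,5,7) by auto
    show "set (x # L @ [y]) \<subseteq> V" using e(1,2,6) SV by auto
    show "walk E (x # L @ [y])" using e(4) .
    show "E (last (x # L @ [y])) (hd (x # L @ [y]))" using Exy by simp
  qed
  then show ?thesis by blast
qed

lemma all_equal_girth:
  assumes "\<forall>cs. is_cycle V E cs \<longrightarrow> length cs = N" "\<exists>cs. is_cycle V E cs"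
  shows "girth V E = circumference V E"
proof -
  have "{length cs | cs. is_cycle V E cs} = {N}" using assms by auto
  then show ?thesis unfolding girth_def circumference_def by simp
qed

lemma girth_eq_all:
  assumes sg: "simple_graph V E" and ex: "\<exists>cs. is_cycle V E cs" and eq: "girth V E = circumference V E"
  shows "\<forall>cs. is_cycle V E cs \<longrightarrow> length cs = girth V E"
proof -
  define LS where "LS = {length cs | cs. is_cycle V E cs}"
  have finV: "finite V" using sg unfolding simple_graph_def by blast
  have "LS \<subseteq> {..card V}"
  proof
    fix l assume "l \<in> LS"
    then obtain cs where cs: "is_cycle V E cs" "l = length cs" unfolding LS_def by blast
    then have "distinct cs" "set cs \<subseteq> V" unfolding is_cycle_def by blast+
    then have "length cs \<le> card V" using card_mono[OF finV] distinct_card by metis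
    then show "l \<in> {..card V}" using cs(2) by simp
  qed
  then have fin: "finite LS" using finite_subset by blast
  have ne: "LS \<noteq> {}" using ex unfolding LS_def by blast
  show ?thesis
  proof (intro allI impI)
    fix cs assume "is_cycle V E cs"
    then have l: "length cs \<in> LS" unfolding LS_def by blast
    have "Min LS \<le> length cs" "length cs \<le> Max LS" using Min_le[OF fin l] Max_ge[OF fin l] by auto
    moreover have "Min LS = Max LS" using eq unfolding girth_def circumference_def LS_def by simp
    ultimately show "length cs = girth V E" unfolding girth_def LS_def[symmetric] by simp
  qed
qed

theorem lemma15:
  fixes V :: "'a set" and E :: "'a \<Rightarrow> 'a \<Rightarrow> bool"
  assumes "simple_graph V E" and "two_connected V E"
  shows "girth V E = circumference V E \<longleftrightarrow> is_cycle_graph V E \<or> is_uniform_theta V E"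
proof
  assume eq: "girth V E = circumference V E"
  obtain C where C: "is_cycle V E C" using cycle_exists[OF assms] by blast
  have "\<forall>cs. is_cycle V E cs \<longrightarrow> length cs = girth V E"
    using girth_eq_all[OF assms(1) _ eq] C by blast
  then show "is_cycle_graph V E \<or> is_uniform_theta V E" using from_cycle[OF assms _ C] by blast
next
  assume H: "is_cycle_graph V E \<or> is_uniform_theta V E"
  have ex: "\<exists>cs. is_cycle V E cs" using cycle_exists[OF assms] .
  show "girth V E = circumference V E"
  proof (cases "is_cycle_graph V E")
    case True
    have con: "connected_on V E" using assms(2) unfolding two_connected_def by blast
    have "\<forall>cs. is_cycle V E cs \<longrightarrow> length cs = card V"
      using deg2_len[OF assms(1) con cycle_graph_deg[OF True]] by blast
    then show ?thesis using all_equal_girth ex by blast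
  next
    case False
    then have "is_uniform_theta V E" using H by blast
    then obtain u w a Ps where T: "u \<noteq> w" "a \<ge> 1" "Ps \<noteq> []"
      "\<forall>P\<in>set Ps. length P = a + 1 \<and> distinct P \<and> hd P = u \<and> last P = w"
      "\<forall>i < length Ps. \<forall>j < length Ps. i \<noteq> j \<longrightarrow> set (Ps ! i) \<inter> set (Ps ! j) = {u, w}"
      "V = (\<Union>P\<in>set Ps. set P)"
      "\<forall>x y. E x y \<longleftrightarrow> (\<exists>P\<in>set Ps. \<exists>i. Suc i < length P \<and>
        ((x = P ! i \<and> y = P ! Suc i) \<or> (y = P ! i \<and> x = P ! Suc i)))"
      unfolding is_uniform_theta_def by blast
    have "\<forall>cs. is_cycle V E cs \<longrightarrow> length cs = 2 * a"
      using theta_cycle_len[OF assms T] by blast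
    then show ?thesis using all_equal_girth ex by blast
  qed
qed


end
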